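(* Let $A,B\in\mathbb{C}^{m\times n}$. The following are equivalent: (a) $A\ *\!\!\le B$; (b) $A\le^{\diamond}B$ and $A^*A=A^*B$; (c) $A\le^{\diamond}B$ and $A^\dagger A=A^\dagger B$; (d) $A\le^{\diamond}B$ and $A^*B$ is Hermitian.
   Context: $M^*$ is the conjugate transpose, $M^\dagger$ the Moore–Penrose inverse, $\mathcal{R}(M)$ the column space. Left star order: $A\ *\!\!\le B$ iff $A^*A=A^*B$ and $\mathcal{R}(A)\subseteq\mathcal{R}(B)$. Diamond order: $A\le^{\diamond}B$ iff $\mathcal{R}(A)\subseteq\mathcal{R}(B)$, $\mathcal{R}(A^* )\subseteq\mathcal{R}(B^* )$, and $AB^*A=AA^*A$. *)

theory Defs
  imports "HOL-Analysis.Analysis"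
begin

text \<open>Complex m x n matrices are modelled as complex^'n^'m (rows indexed by 'm).\<close>

definition ctrans :: "complex^'n^'m \<Rightarrow> complex^'m^'n" where
  "ctrans A = (\<chi> i j. cnj (A $ j $ i))"

definition colspace :: "complex^'n^'m \<Rightarrow> (complex^'m) set" where
  "colspace A = range (\<lambda>x. A *v x)"

definition is_mp_inverse :: "complex^'n^'m \<Rightarrow> complex^'m^'n \<Rightarrow> bool" where
  "is_mp_inverse A X \<longleftrightarrow>
     A ** X ** A = A \<and> X ** A ** X = X \<and>
     ctrans (A ** X) = A ** X \<and> ctrans (X ** A) = X ** A"

definition mp_inverse :: "complex^'n^'m \<Rightarrow> complex^'m^'n" where
  "mp_inverse A = (THE X. is_mp_inverse A X)"

definition left_star_le :: "complex^'n^'m \<Rightarrow> complex^'n^'m \<Rightarrow> bool" where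
  "left_star_le A B \<longleftrightarrow> ctrans A ** A = ctrans A ** B \<and> colspace A \<subseteq> colspace B"

definition diamond_le :: "complex^'n^'m \<Rightarrow> complex^'n^'m \<Rightarrow> bool" where
  "diamond_le A B \<longleftrightarrow> colspace A \<subseteq> colspace B \<and> colspace (ctrans A) \<subseteq> colspace (ctrans B)
     \<and> A ** ctrans B ** A = A ** ctrans A ** A"

end

theory Submission
  imports Defs
begin

lemma ctrans_ctrans[simp]: "ctrans (ctrans A) = A"
  by (simp add: ctrans_def vec_eq_iff)

lemma ctrans_mult: "ctrans (A ** B) = ctrans B ** ctrans A"
  by (simp add: ctrans_def vec_eq_iff matrix_matrix_mult_def mult.commute)

lemma ctrans_diff: "ctrans (A - B) = ctrans A - ctrans B"
  by (simp add: ctrans_def vec_eq_iff)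

lemma ctrans_zero[simp]: "ctrans 0 = 0"
  by (simp add: ctrans_def vec_eq_iff)

lemma mmult_diff_left: "(A::'a::ring_1^'n^'m) ** (B - C) = A ** B - A ** C"
  by (simp add: matrix_matrix_mult_def vec_eq_iff algebra_simps sum_subtractf)

lemma mmult_diff_right: "((B::'a::ring_1^'n^'m) - C) ** A = B ** A - C ** A"
  by (simp add: matrix_matrix_mult_def vec_eq_iff algebra_simps sum_subtractf)

lemma inner_cplx: "inner (a::complex) b = Re (cnj a * b)"
  by (simp add: inner_complex_def)

lemma inner_adj: "inner (A *v x) y = inner x (ctrans A *v y)"
proof -
  have "inner (A *v x) y = (\<Sum>i\<in>UNIV. Re (cnj (\<Sum>j\<in>UNIV. A$i$j * x$j) * y$i))"
    by (simp add: inner_vec_def matrix_vector_mult_def inner_cplx)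
  also have "\<dots> = (\<Sum>i\<in>UNIV. \<Sum>j\<in>UNIV. Re (cnj (A$i$j) * cnj (x$j) * y$i))"
    by (simp add: sum_distrib_right Re_sum)
  also have "\<dots> = (\<Sum>j\<in>UNIV. \<Sum>i\<in>UNIV. Re (cnj (A$i$j) * cnj (x$j) * y$i))"
    by (rule sum.swap)
  also have "\<dots> = inner x (ctrans A *v y)"
    by (simp add: inner_vec_def matrix_vector_mult_def inner_cplx ctrans_def
         sum_distrib_left Re_sum mult_ac)
  finally show ?thesis .
qed

lemma inner_self_ctrans: "inner x (ctrans A *v (A *v x)) = 0 \<Longrightarrow> A *v x = 0"
  by (metis inner_adj inner_eq_zero_iff inner_commute)

lemma mvec_scaleR: "(M::complex^'n^'m) *v (c *\<^sub>R x) = c *\<^sub>R (M *v x)"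
  by (simp add: vec_eq_iff matrix_vector_mult_def scaleR_sum_right)

lemma subspace_colspace: "subspace (colspace (M::complex^'n^'m))"
  unfolding subspace_def colspace_def
proof (intro conjI ballI allI)
  show "0 \<in> range ((*v) M)" by (metis matrix_vector_mult_0_right rangeI)
next
  fix x y assume "x \<in> range ((*v) M)" "y \<in> range ((*v) M)"
  then obtain a b where "x = M *v a" "y = M *v b" by auto
  thus "x + y \<in> range ((*v) M)" by (metis matrix_vector_right_distrib rangeI)
next
  fix c x assume "x \<in> range ((*v) M)"
  then obtain a where "x = M *v a" by auto
  thus "c *\<^sub>R x \<in> range ((*v) M)" by (metis mvec_scaleR rangeI)
qed

lemma colspace_mult: "colspace (M ** N) \<subseteq> colspace M"
  unfolding colspace_def by (auto simp: matrix_vector_mul_assoc[symmetric])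

lemma colspace_ctrans_sub: "colspace (ctrans A) \<subseteq> colspace (ctrans A ** (A::complex^'n^'m))"
proof
  fix y assume "y \<in> colspace (ctrans A)"
  then obtain z where yz: "y = ctrans A *v z" by (auto simp: colspace_def)
  let ?S = "colspace (ctrans A ** A)"
  obtain s w where s: "s \<in> span ?S" and w: "\<And>u. u \<in> span ?S \<Longrightarrow> orthogonal w u" and ysw: "y = s + w"
    using orthogonal_subspace_decomp_exists[of ?S y] by metis
  have spanS: "span ?S = ?S" using subspace_colspace span_eq_iff by blast
  have "inner w ((ctrans A ** A) *v w) = 0"
    using w[of "(ctrans A ** A) *v w"] spanS unfolding orthogonal_def colspace_def by auto
  hence Aw: "A *v w = 0" using inner_self_ctrans by (metis matrix_vector_mul_assoc)
  have "s \<in> ?S" using s spanS by blast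
  then obtain t where st: "s = (ctrans A ** A) *v t" unfolding colspace_def by blast
  have "w = ctrans A *v (z - A *v t)"
    using ysw yz st by (simp add: matrix_vector_mult_diff_distrib matrix_vector_mul_assoc)
  hence "inner w w = inner (z - A *v t) (A *v w)" by (metis inner_adj ctrans_ctrans)
  hence "w = 0" using Aw by simp
  thus "y \<in> ?S" using ysw s spanS by simp
qed

lemma colspace_factor:
  assumes "colspace (N::complex^'p^'m) \<subseteq> colspace (M::complex^'n^'m)"
  shows "\<exists>U. N = M ** U"
proof -
  have "\<forall>j. \<exists>x. N *v axis j 1 = M *v x"
    using assms by (auto simp: colspace_def)
  then obtain f where f: "\<And>j. N *v axis j 1 = M *v f j" by metis
  define U where "U = (\<chi> i j. f j $ i)"
  have "N = M ** U"
  proof (subst vec_eq_iff, intro allI, subst vec_eq_iff, intro allI)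
    fix i j
    have "N $ i $ j = (N *v axis j 1) $ i"
      by (simp add: matrix_vector_mult_def axis_def if_distrib cong: if_cong)
    also have "\<dots> = (M *v f j) $ i" by (simp only: f)
    also have "\<dots> = (M ** U) $ i $ j"
      by (simp add: matrix_vector_mult_def matrix_matrix_mult_def U_def)
    finally show "N $ i $ j = (M ** U) $ i $ j" .
  qed
  thus ?thesis by blast
qed


lemma zero_gram: assumes "ctrans Z ** (Z::complex^'n^'m) = 0" shows "Z = 0"
proof -
  have "\<And>x. Z *v x = 0"
  proof -
    fix x
    have "inner x (ctrans Z *v (Z *v x)) = 0"
      using assms by (simp add: matrix_vector_mul_assoc)
    thus "Z *v x = 0" by (rule inner_self_ctrans)
  qed
  hence "\<And>i j. Z $ i $ j = 0"
  proof -
    fix i j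
    have "Z $ i $ j = (Z *v axis j 1) $ i"
      by (simp add: matrix_vector_mult_def axis_def if_distrib cong: if_cong)
    thus "Z $ i $ j = 0" using \<open>\<And>x. Z *v x = 0\<close> by simp
  qed
  thus ?thesis by (simp add: vec_eq_iff)
qed

lemma group_inv_props:
  fixes M :: "'a::ring_1^'n^'n"
  assumes h1: "M = M ** M ** U" and h2: "M = W ** M ** M"
  defines "V \<equiv> W ** M ** U"
  shows "M ** V ** M = M" "V ** M ** V = V" "M ** V = V ** M"
proof -
  have P: "W ** M = M ** U"
    by (metis h1 h2 matrix_mul_assoc)
  have VM: "V ** M = W ** M"
  proof -
    have "U ** M = U ** W ** M ** M" using h2 by (metis matrix_mul_assoc)
    have "M ** U ** M = M" by (metis P h2 matrix_mul_assoc)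
    thus ?thesis unfolding V_def by (metis matrix_mul_assoc)
  qed
  have MWM: "M ** W ** M = M" by (metis P h1 matrix_mul_assoc)
  have MV: "M ** V = M ** U" unfolding V_def by (metis MWM matrix_mul_assoc)
  show "M ** V ** M = M" using VM MWM by (metis matrix_mul_assoc)
  show "V ** M ** V = V" unfolding V_def by (metis VM V_def MWM matrix_mul_assoc)
  show "M ** V = V ** M" using VM MV P by simp
qed

lemma group_inv_unique:
  fixes M :: "'a::ring_1^'n^'n"
  assumes "M ** V1 ** M = M" "V1 ** M ** V1 = V1" "M ** V1 = V1 ** M"
     and "M ** V2 ** M = M" "V2 ** M ** V2 = V2" "M ** V2 = V2 ** M"
  shows "V1 = V2"
proof -
  have a: "M ** V1 = M ** V2 ** (M ** V1)" by (metis assms(4) matrix_mul_assoc)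
  have b: "M ** V1 = M ** V1 ** (M ** V2)" by (metis assms(3,4,6) matrix_mul_assoc)
  have c: "M ** V2 = M ** V1 ** (M ** V2)" by (metis assms(1) matrix_mul_assoc)
  have d: "M ** V2 = M ** V2 ** (M ** V1)" by (metis assms(1,3,6) matrix_mul_assoc)
  have ab: "M ** V2 ** (M ** V1) = M ** V1 ** (M ** V2)"
  proof -
    have "M ** V2 ** (M ** V1) = M ** (V2 ** M) ** V1" by (simp add: matrix_mul_assoc)
    also have "\<dots> = M ** (M ** V2) ** V1" using assms(6) by simp
    also have "\<dots> = M ** M ** (V2 ** V1)" by (simp add: matrix_mul_assoc)
    finally have e1: "M ** V2 ** (M ** V1) = M ** M ** (V2 ** V1)" .
    have "M ** V1 ** (M ** V2) = M ** (V1 ** M) ** V2" by (simp add: matrix_mul_assoc)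
    also have "\<dots> = M ** (M ** V1) ** V2" using assms(3) by simp
    also have "\<dots> = M ** M ** (V1 ** V2)" by (simp add: matrix_mul_assoc)
    finally show ?thesis using e1 a b c d by simp
  qed
  have P: "M ** V1 = M ** V2" using a b c d ab by simp
  have "V1 = V1 ** (M ** V1)" by (metis assms(2) matrix_mul_assoc)
  also have "\<dots> = V1 ** (M ** V2)" using P by simp
  also have "\<dots> = (M ** V1) ** V2" by (metis assms(3) matrix_mul_assoc)
  also have "\<dots> = (M ** V2) ** V2" using P by simp
  also have "\<dots> = V2" by (metis assms(5,6) matrix_mul_assoc)
  finally show ?thesis .
qed


lemma ctrans_gram: "ctrans (ctrans A ** A) = ctrans A ** A"
  by (simp add: ctrans_mult)

lemma hermitian_ginv:
  fixes M :: "complex^'n^'n"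
  assumes hM: "ctrans M = M"
  obtains V where "M ** V ** M = M" "V ** M ** V = V" "M ** V = V ** M" "ctrans V = V"
proof -
  have "colspace (ctrans M) \<subseteq> colspace (ctrans M ** M)" by (rule colspace_ctrans_sub)
  hence "colspace M \<subseteq> colspace (M ** M)" using hM by simp
  then obtain U where h1: "M = M ** M ** U" using colspace_factor by blast
  have h2: "M = ctrans U ** M ** M"
  proof -
    have "ctrans M = ctrans (M ** M ** U)" using h1 by simp
    thus ?thesis using hM by (simp add: ctrans_mult matrix_mul_assoc)
  qed
  define V where "V = ctrans U ** M ** U"
  note g = group_inv_props[OF h1 h2, folded V_def]
  have g1: "M ** ctrans V ** M = M"
    using arg_cong[OF g(1), of ctrans] hM by (simp add: ctrans_mult matrix_mul_assoc)
  have g2: "ctrans V ** M ** ctrans V = ctrans V"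
    using arg_cong[OF g(2), of ctrans] hM by (simp add: ctrans_mult matrix_mul_assoc)
  have g3: "M ** ctrans V = ctrans V ** M"
    using arg_cong[OF g(3), of ctrans] hM by (simp add: ctrans_mult matrix_mul_assoc)
  have "V = ctrans V" by (rule group_inv_unique[OF g g1 g2 g3])
  thus ?thesis using g that by simp
qed

lemma mp_exists: "\<exists>X. is_mp_inverse (A::complex^'n^'m) X"
proof -
  define M where "M = ctrans A ** A"
  have hM: "ctrans M = M" unfolding M_def by (rule ctrans_gram)
  obtain V where v1: "M ** V ** M = M" and v2: "V ** M ** V = V" and v3: "M ** V = V ** M"
     and v4: "ctrans V = V" using hermitian_ginv[OF hM] by blast
  define Z where "Z = A ** V ** M - A"
  have "ctrans Z ** Z = (M ** V ** ctrans A - ctrans A) ** (A ** V ** M - A)"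
    unfolding Z_def using v4 hM by (simp add: ctrans_diff ctrans_mult matrix_mul_assoc)
  also have "\<dots> = M ** V ** M ** V ** M - M ** V ** M - M ** V ** M + M"
    by (simp add: mmult_diff_left mmult_diff_right M_def matrix_mul_assoc)
  also have "\<dots> = 0" using v1 by simp
  finally have "Z = 0" by (rule zero_gram)
  hence AVM: "A ** V ** M = A" unfolding Z_def by simp
  define X where "X = V ** ctrans A"
  have "A ** X ** A = A" unfolding X_def using AVM by (simp add: M_def matrix_mul_assoc)
  moreover have "X ** A ** X = X" unfolding X_def using v2 by (simp add: M_def matrix_mul_assoc)
  moreover have "ctrans (A ** X) = A ** X" unfolding X_def using v4
    by (simp add: ctrans_mult matrix_mul_assoc)
  moreover have "ctrans (X ** A) = X ** A"
  proof -
    have "X ** A = V ** M" unfolding X_def M_def by (simp add: matrix_mul_assoc)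
    thus ?thesis using v4 v3 hM by (simp add: ctrans_mult)
  qed
  ultimately show ?thesis unfolding is_mp_inverse_def by blast
qed

lemma mp_unique:
  assumes "is_mp_inverse A X" "is_mp_inverse A Y" shows "X = Y"
proof -
  from assms have x1: "A ** X ** A = A" and x2: "X ** A ** X = X"
    and x3: "ctrans (A ** X) = A ** X" and x4: "ctrans (X ** A) = X ** A"
    and y1: "A ** Y ** A = A" and y2: "Y ** A ** Y = Y"
    and y3: "ctrans (A ** Y) = A ** Y" and y4: "ctrans (Y ** A) = Y ** A"
    unfolding is_mp_inverse_def by auto
  have "X = X ** (A ** X)" using x2 by (simp add: matrix_mul_assoc)
  also have "\<dots> = X ** ctrans X ** ctrans A" using x3 by (metis ctrans_mult matrix_mul_assoc)
  also have "\<dots> = X ** ctrans X ** ctrans (A ** Y ** A)" using y1 by simp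
  also have "\<dots> = X ** ctrans (A ** X) ** ctrans (A ** Y)"
    by (simp add: ctrans_mult matrix_mul_assoc)
  also have "\<dots> = X ** A ** Y" using x3 y3 x2 by (metis matrix_mul_assoc)
  finally have ex: "X = X ** A ** Y" .
  have "Y = (Y ** A) ** Y" using y2 by (simp add: matrix_mul_assoc)
  also have "\<dots> = ctrans A ** ctrans Y ** Y" using y4 by (metis ctrans_mult)
  also have "\<dots> = ctrans (A ** X ** A) ** ctrans Y ** Y" using x1 by simp
  also have "\<dots> = ctrans (X ** A) ** ctrans (Y ** A) ** Y"
    by (simp add: ctrans_mult matrix_mul_assoc)
  also have "\<dots> = X ** A ** Y" using x4 y4 y2 by (metis matrix_mul_assoc)
  finally show ?thesis using ex by simp
qed

lemma mp_inverse_is: "is_mp_inverse A (mp_inverse A)"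
  unfolding mp_inverse_def
  by (rule theI') (use mp_exists mp_unique in blast)


lemma star_diamond:
  fixes A B :: "complex^'n^'m"
  assumes "left_star_le A B" shows "diamond_le A B"
proof -
  from assms have e: "ctrans A ** A = ctrans A ** B" and c: "colspace A \<subseteq> colspace B"
    unfolding left_star_le_def by auto
  have e2: "ctrans B ** A = ctrans A ** A"
    using arg_cong[OF e, of ctrans] by (simp add: ctrans_mult)
  obtain U where U: "ctrans A = ctrans A ** A ** U"
    using colspace_factor[OF colspace_ctrans_sub[of A]] by blast
  have "ctrans A = ctrans B ** (A ** U)" using U e2 by (simp add: matrix_mul_assoc)
  hence c2: "colspace (ctrans A) \<subseteq> colspace (ctrans B)" by (metis colspace_mult)
  have "A ** ctrans B ** A = A ** ctrans A ** A"
    using e2 by (simp add: matrix_mul_assoc[symmetric])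
  thus ?thesis using c c2 unfolding diamond_le_def by blast
qed

lemma diamond_herm:
  fixes A B :: "complex^'n^'m"
  assumes d: "diamond_le A B" and h: "ctrans (ctrans A ** B) = ctrans A ** B"
  shows "ctrans A ** A = ctrans A ** B"
proof -
  from d have dd: "A ** ctrans B ** A = A ** ctrans A ** A" unfolding diamond_le_def by auto
  have "ctrans B ** A = ctrans A ** B" using h by (simp add: ctrans_mult)
  hence "A ** ctrans A ** B = A ** ctrans A ** A" using dd by (simp add: matrix_mul_assoc[symmetric])
  hence z: "A ** ctrans A ** (B - A) = 0" by (simp add: mmult_diff_left)
  define Z where "Z = ctrans A ** (B - A)"
  have "ctrans Z ** Z = ctrans (B - A) ** (A ** ctrans A ** (B - A))"
    unfolding Z_def by (simp add: ctrans_mult matrix_mul_assoc)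
  also have "\<dots> = 0" using z by simp
  finally have "Z = 0" by (rule zero_gram)
  thus ?thesis unfolding Z_def by (simp add: mmult_diff_left)
qed

lemma mp_equiv:
  fixes A B :: "complex^'n^'m"
  shows "ctrans A ** A = ctrans A ** B \<longleftrightarrow> mp_inverse A ** A = mp_inverse A ** B"
proof -
  define X where "X = mp_inverse A"
  have "is_mp_inverse A X" unfolding X_def by (rule mp_inverse_is)
  hence x1: "A ** X ** A = A" and x2: "X ** A ** X = X"
    and x3: "ctrans (A ** X) = A ** X"
    unfolding is_mp_inverse_def by auto
  have XX: "X = X ** ctrans X ** ctrans A"
  proof -
    have "X = X ** (A ** X)" using x2 by (simp add: matrix_mul_assoc)
    also have "\<dots> = X ** ctrans (A ** X)" using x3 by simp
    finally show ?thesis by (simp add: ctrans_mult matrix_mul_assoc)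
  qed
  have AA: "ctrans A = ctrans A ** A ** X"
  proof -
    have "ctrans A = ctrans (A ** X ** A)" using x1 by simp
    also have "\<dots> = ctrans A ** ctrans (A ** X)" by (simp add: ctrans_mult)
    finally show ?thesis using x3 by (simp add: matrix_mul_assoc)
  qed
  show ?thesis unfolding X_def[symmetric]
  proof
    assume e: "ctrans A ** A = ctrans A ** B"
    have "X ** B = X ** ctrans X ** (ctrans A ** B)" using XX
      by (metis matrix_mul_assoc)
    also have "\<dots> = X ** ctrans X ** (ctrans A ** A)" using e by simp
    also have "\<dots> = X ** A" using XX by (metis matrix_mul_assoc)
    finally show "X ** A = X ** B" by simp
  next
    assume e: "X ** A = X ** B"
    have "ctrans A ** B = ctrans A ** A ** (X ** B)" using AA
      by (metis matrix_mul_assoc)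
    also have "\<dots> = ctrans A ** A ** (X ** A)" using e by simp
    also have "\<dots> = ctrans A ** A" using AA by (metis matrix_mul_assoc)
    finally show "ctrans A ** A = ctrans A ** B" by simp
  qed
qed

theorem theorem4p2:
  fixes A B :: "complex^'n^'m"
  shows "(left_star_le A B \<longleftrightarrow> (diamond_le A B \<and> ctrans A ** A = ctrans A ** B))
       \<and> (left_star_le A B \<longleftrightarrow> (diamond_le A B \<and> mp_inverse A ** A = mp_inverse A ** B))
       \<and> (left_star_le A B \<longleftrightarrow> (diamond_le A B \<and> ctrans (ctrans A ** B) = ctrans A ** B))"
proof -
  have ab: "left_star_le A B \<longleftrightarrow> (diamond_le A B \<and> ctrans A ** A = ctrans A ** B)"
    using star_diamond unfolding left_star_le_def diamond_le_def by blast
  moreover have "left_star_le A B \<longleftrightarrow> (diamond_le A B \<and> ctrans (ctrans A ** B) = ctrans A ** B)"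
    using ab diamond_herm by (metis ctrans_gram)
  ultimately show ?thesis using mp_equiv by blast
qed

end
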